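(* Let $\mathcal{A}$ be a finite-dimensional prebialgebra over $\mathbb{C}$ (unit $1_{\mathcal{A}}$, comultiplication $\Delta$, counit $\epsilon$), $\rho:\mathcal{A}\to M_{d_\rho}(\mathbb{C})$ a representation and $(v_{ij})_{1\le i,j\le d_v}$ a corepresentation. With a basis $B(\mathcal{A})$ and dual basis $\delta_x$, define $U^{ab}_{ij}=\rho_{ab}(v_{ij})$, $R^{yx}_{ab}=(\delta_y\otimes\rho_{ab})(\Delta(x))$, $V^{yx}_{ij}=\delta_y(xv_{ij})$, $u_x=\delta_x(1_{\mathcal{A}})$, $e_x=\epsilon(x)$. For $n\ge1$ define $$M_n(a_1,i_1,\dots,a_n,i_n;b_1,j_1,\dots,b_n,j_n)=\sum_{x_0,\dots,x_{2n}\in B(\mathcal{A})}e_{x_0}\prod_{m=1}^{n}\Big(R^{x_{2m-2}x_{2m-1}}_{a_mb_m}V^{x_{2m-1}x_{2m}}_{i_mj_m}\Big)u_{x_{2n}},$$ and define $T_n$ recursively by $T_1(a_1,i_1;b_1,j_1)=U^{a_1b_1}_{i_1j_1}$ and, for $n\ge2$, $$T_n(a_1,i_1,\dots,a_n,i_n;b_1,j_1,\dots,b_n,j_n)=\sum_{c_1,\dots,c_{n-1}}\sum_{k_2,\dots,k_n}T_{n-1}(a_1,i_2,a_2,i_3,\dots,a_{n-1},i_n;c_1,k_2,\dots,c_{n-1},k_n)\prod_{m=1}^nU^{c_mb_m}_{k_mj_m}$$ with $k_1:=i_1$, $c_n:=a_n$. Then $M_n=T_n$ for all $n\ge1$.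
   Context: A prebialgebra is a unital associative algebra and a coassociative counital coalgebra ($(\Delta\otimes\mathrm{id})\Delta=(\mathrm{id}\otimes\Delta)\Delta$, $(\epsilon\otimes\mathrm{id})\Delta=(\mathrm{id}\otimes\epsilon)\Delta=\mathrm{id}$) such that $\Delta(xy)=\Delta(x)\Delta(y)$; no compatibility of $\Delta$ with the unit or of $\epsilon$ with multiplication is assumed. A representation is a unital algebra homomorphism $\rho:\mathcal{A}\to M_{d_\rho}(\mathbb{C})$; a corepresentation is a matrix $(v_{ij})$ of elements of $\mathcal{A}$ with $\Delta(v_{ij})=\sum_kv_{ik}\otimes v_{kj}$ and $\epsilon(v_{ij})=\delta_{ij}$. $T_n$ is the contraction of a triangular brickwork network of $n(n+1)/2$ copies of $U$. *)

theory Defs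
  imports Complex_Main "HOL-Library.FuncSet"
begin

text \<open>
  A basis B(A) is indexed by {..<N}; an element of A is identified with its coordinate
  vector.  The structure is given by
    mu x y z  = delta_z(x y)               (multiplication)
    one z     = delta_z(1_A)                (unit)
    cop x y z = (delta_y (x) delta_z)(Delta x)  (comultiplication)
    eps x     = epsilon(x)                  (counit)
  All maps are extended linearly from the basis.
\<close>

definition prebialgebra ::
  "nat \<Rightarrow> (nat \<Rightarrow> nat \<Rightarrow> nat \<Rightarrow> complex) \<Rightarrow> (nat \<Rightarrow> complex)
   \<Rightarrow> (nat \<Rightarrow> nat \<Rightarrow> nat \<Rightarrow> complex) \<Rightarrow> (nat \<Rightarrow> complex) \<Rightarrow> bool" where
  "prebialgebra N mu one cop eps \<longleftrightarrow>
     \<comment> \<open>associativity: (xy)z = x(yz)\<close>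
     (\<forall>x<N. \<forall>y<N. \<forall>z<N. \<forall>w<N.
        (\<Sum>k<N. mu x y k * mu k z w) = (\<Sum>k<N. mu y z k * mu x k w)) \<and>
     \<comment> \<open>unit: 1 x = x = x 1\<close>
     (\<forall>x<N. \<forall>w<N. (\<Sum>k<N. one k * mu k x w) = (if x = w then 1 else 0)) \<and>
     (\<forall>x<N. \<forall>w<N. (\<Sum>k<N. one k * mu x k w) = (if x = w then 1 else 0)) \<and>
     \<comment> \<open>coassociativity\<close>
     (\<forall>x<N. \<forall>a<N. \<forall>b<N. \<forall>c<N.
        (\<Sum>k<N. cop x k c * cop k a b) = (\<Sum>k<N. cop x a k * cop k b c)) \<and>
     \<comment> \<open>counit\<close>
     (\<forall>x<N. \<forall>b<N. (\<Sum>k<N. eps k * cop x k b) = (if x = b then 1 else 0)) \<and>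
     (\<forall>x<N. \<forall>a<N. (\<Sum>k<N. cop x a k * eps k) = (if x = a then 1 else 0)) \<and>
     \<comment> \<open>Delta(xy) = Delta(x) Delta(y)\<close>
     (\<forall>x<N. \<forall>y<N. \<forall>a<N. \<forall>b<N.
        (\<Sum>k<N. mu x y k * cop k a b) =
        (\<Sum>a1<N. \<Sum>b1<N. \<Sum>a2<N. \<Sum>b2<N.
            cop x a1 b1 * cop y a2 b2 * mu a1 a2 a * mu b1 b2 b))"

text \<open>A representation: rho x a b = rho_ab(basis element x), a unital algebra
  homomorphism into d x d complex matrices (indices < d).\<close>

definition representation ::
  "nat \<Rightarrow> (nat \<Rightarrow> nat \<Rightarrow> nat \<Rightarrow> complex) \<Rightarrow> (nat \<Rightarrow> complex)
   \<Rightarrow> nat \<Rightarrow> (nat \<Rightarrow> nat \<Rightarrow> nat \<Rightarrow> complex) \<Rightarrow> bool" where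
  "representation N mu one d rho \<longleftrightarrow>
     (\<forall>x<N. \<forall>y<N. \<forall>a<d. \<forall>b<d.
        (\<Sum>k<N. mu x y k * rho k a b) = (\<Sum>c<d. rho x a c * rho y c b)) \<and>
     (\<forall>a<d. \<forall>b<d. (\<Sum>k<N. one k * rho k a b) = (if a = b then 1 else 0))"

text \<open>A corepresentation: v i j x = delta_x(v_ij), indices i, j < dv.\<close>

definition corepresentation ::
  "nat \<Rightarrow> (nat \<Rightarrow> nat \<Rightarrow> nat \<Rightarrow> complex) \<Rightarrow> (nat \<Rightarrow> complex)
   \<Rightarrow> nat \<Rightarrow> (nat \<Rightarrow> nat \<Rightarrow> nat \<Rightarrow> complex) \<Rightarrow> bool" where
  "corepresentation N cop eps dv v \<longleftrightarrow>
     (\<forall>i<dv. \<forall>j<dv. \<forall>a<N. \<forall>b<N.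
        (\<Sum>x<N. v i j x * cop x a b) = (\<Sum>k<dv. v i k a * v k j b)) \<and>
     (\<forall>i<dv. \<forall>j<dv. (\<Sum>x<N. v i j x * eps x) = (if i = j then 1 else 0))"

definition Ucoef :: "nat \<Rightarrow> (nat \<Rightarrow> nat \<Rightarrow> nat \<Rightarrow> complex) \<Rightarrow> (nat \<Rightarrow> nat \<Rightarrow> nat \<Rightarrow> complex)
   \<Rightarrow> nat \<Rightarrow> nat \<Rightarrow> nat \<Rightarrow> nat \<Rightarrow> complex" where
  "Ucoef N rho v a b i j = (\<Sum>x<N. v i j x * rho x a b)"

definition Rcoef :: "nat \<Rightarrow> (nat \<Rightarrow> nat \<Rightarrow> nat \<Rightarrow> complex) \<Rightarrow> (nat \<Rightarrow> nat \<Rightarrow> nat \<Rightarrow> complex)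
   \<Rightarrow> nat \<Rightarrow> nat \<Rightarrow> nat \<Rightarrow> nat \<Rightarrow> complex" where
  "Rcoef N cop rho y x a b = (\<Sum>z<N. cop x y z * rho z a b)"

definition Vcoef :: "nat \<Rightarrow> (nat \<Rightarrow> nat \<Rightarrow> nat \<Rightarrow> complex) \<Rightarrow> (nat \<Rightarrow> nat \<Rightarrow> nat \<Rightarrow> complex)
   \<Rightarrow> nat \<Rightarrow> nat \<Rightarrow> nat \<Rightarrow> nat \<Rightarrow> complex" where
  "Vcoef N mu v y x i j = (\<Sum>z<N. v i j z * mu x z y)"

text \<open>M_n; the index lists as, is, bs, js hold a_1..a_n etc. (0-based list positions),
  and the basis indices x_0..x_{2n} form a function on {0..2n}.\<close>
definition Mn :: "nat \<Rightarrow> (nat \<Rightarrow> nat \<Rightarrow> nat \<Rightarrow> nat \<Rightarrow> complex) \<Rightarrow> (nat \<Rightarrow> nat \<Rightarrow> nat \<Rightarrow> nat \<Rightarrow> complex)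
   \<Rightarrow> (nat \<Rightarrow> complex) \<Rightarrow> (nat \<Rightarrow> complex) \<Rightarrow> nat
   \<Rightarrow> nat list \<Rightarrow> nat list \<Rightarrow> nat list \<Rightarrow> nat list \<Rightarrow> complex" where
  "Mn N R V e u n as is bs js =
     (\<Sum>xs \<in> {0..2*n} \<rightarrow>\<^sub>E {..<N}.
        e (xs 0) *
        (\<Prod>m\<in>{1..n}. R (xs (2*m-2)) (xs (2*m-1)) (as!(m-1)) (bs!(m-1))
                      * V (xs (2*m-1)) (xs (2*m)) (is!(m-1)) (js!(m-1)))
        * u (xs (2*n)))"

definition idx_lists :: "nat \<Rightarrow> nat \<Rightarrow> nat list set" where
  "idx_lists n d = {xs. length xs = n \<and> set xs \<subseteq> {..<d}}"

text \<open>T_n, recursively; Tn U d dv n as is bs js.  With k_1 := i_1, c_n := a_n.\<close>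
fun Tn :: "(nat \<Rightarrow> nat \<Rightarrow> nat \<Rightarrow> nat \<Rightarrow> complex) \<Rightarrow> nat \<Rightarrow> nat \<Rightarrow> nat
   \<Rightarrow> nat list \<Rightarrow> nat list \<Rightarrow> nat list \<Rightarrow> nat list \<Rightarrow> complex" where
  "Tn U d dv 0 as is bs js = 1"
| "Tn U d dv (Suc 0) as is bs js = U (as!0) (bs!0) (is!0) (js!0)"
| "Tn U d dv (Suc (Suc n)) as is bs js =
     (\<Sum>cs \<in> idx_lists (Suc n) d. \<Sum>ks \<in> idx_lists (Suc n) dv.
        Tn U d dv (Suc n) (butlast as) (tl is) cs ks *
        (\<Prod>m<Suc (Suc n). U ((cs @ [last as])!m) (bs!m) ((hd is # ks)!m) (js!m)))"

end

theory Submission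
  imports Defs
begin


definition app :: "nat \<Rightarrow> (nat \<Rightarrow> nat \<Rightarrow> complex) \<Rightarrow> (nat \<Rightarrow> complex) \<Rightarrow> nat \<Rightarrow> complex" where
  "app N K f = (\<lambda>y. \<Sum>x<N. K y x * f x)"

lemma app_sum: "app N K (\<lambda>y. \<Sum>s\<in>S. g s y) = (\<lambda>z. \<Sum>s\<in>S. app N K (\<lambda>y. g s y) z)"
  unfolding app_def by (rule ext) (simp add: sum_distrib_left sum.swap[of _ S])

lemma app_scale: "app N K (\<lambda>y. c * g y) = (\<lambda>z. c * app N K g z)"
  unfolding app_def by (rule ext) (simp add: sum_distrib_left mult.left_commute)

lemma app_cong: "(\<And>x. x < N \<Longrightarrow> f x = g x) \<Longrightarrow> app N K f = app N K g"
  unfolding app_def by (rule ext) simp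

fun Wc :: "nat \<Rightarrow> (nat \<Rightarrow> nat \<Rightarrow> nat \<Rightarrow> nat \<Rightarrow> complex) \<Rightarrow> (nat \<Rightarrow> nat \<Rightarrow> nat \<Rightarrow> nat \<Rightarrow> complex)
   \<Rightarrow> nat list \<Rightarrow> nat list \<Rightarrow> nat list \<Rightarrow> nat list \<Rightarrow> (nat \<Rightarrow> complex) \<Rightarrow> nat \<Rightarrow> complex" where
  "Wc N R V (a#as) (i#ii) (b#bs) (j#js) u =
     app N (\<lambda>y x. R y x a b) (app N (\<lambda>y x. V y x i j) (Wc N R V as ii bs js u))"
| "Wc N R V _ _ _ _ u = u"

lemma Wc_snoc:
  "length as = length ii \<Longrightarrow> length ii = length bs \<Longrightarrow> length bs = length js \<Longrightarrow>
   Wc N R V (as@[a]) (ii@[i]) (bs@[b]) (js@[j]) u =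
   Wc N R V as ii bs js (app N (\<lambda>y x. R y x a b) (app N (\<lambda>y x. V y x i j) u))"
  by (induction as ii bs js rule: list_induct4) auto

lemma sum_PiE_insert:
  assumes "x \<notin> S"
  shows "(\<Sum>f\<in>PiE (insert x S) T. F f) = (\<Sum>y\<in>T x. \<Sum>g\<in>PiE S T. F (g(x:=y)))"
proof -
  have "(\<Sum>f\<in>PiE (insert x S) T. F f) = (\<Sum>p\<in>T x \<times> PiE S T. F ((\<lambda>(y, g). g(x := y)) p))"
    by (subst PiE_insert_eq, subst sum.reindex[OF inj_combinator[OF assms]]) simp
  also have "\<dots> = (\<Sum>y\<in>T x. \<Sum>g\<in>PiE S T. F (g(x:=y)))"
    by (simp add: sum.cartesian_product case_prod_unfold)
  finally show ?thesis .
qed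

lemma Mn_Suc:
  "Mn N R V e u (Suc n) as ii bs js =
   Mn N R V e (app N (\<lambda>y x. R y x (as!n) (bs!n)) (app N (\<lambda>y x. V y x (ii!n) (js!n)) u)) n as ii bs js"
proof -
  define A where "A g = e (g 0) * (\<Prod>m\<in>{1..n}. R (g (2*m-2)) (g (2*m-1)) (as!(m-1)) (bs!(m-1))
                      * V (g (2*m-1)) (g (2*m)) (ii!(m-1)) (js!(m-1)))" for g :: "nat \<Rightarrow> nat"
  have set: "{0..2*Suc n} = insert (2*n+2) (insert (2*n+1) {0..2*n})" by auto
  have "Mn N R V e u (Suc n) as ii bs js =
     (\<Sum>y2<N. \<Sum>y1<N. \<Sum>g\<in>{0..2*n} \<rightarrow>\<^sub>E {..<N}. A g * (R (g (2*n)) y1 (as!n) (bs!n) * V y1 y2 (ii!n) (js!n)) * u y2)"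
    unfolding Mn_def set
    apply (subst sum_PiE_insert, simp)
    apply (subst sum_PiE_insert, simp)
  proof (rule sum.cong[OF refl], rule sum.cong[OF refl], rule sum.cong[OF refl])
    fix y2 y1 :: nat and g :: "nat \<Rightarrow> nat"
    let ?f = "(g(2*n+1:=y1))(2*n+2:=y2)"
    have p: "(\<Prod>m\<in>{1..n}. R (?f (2*m-2)) (?f (2*m-1)) (as!(m-1)) (bs!(m-1))
                      * V (?f (2*m-1)) (?f (2*m)) (ii!(m-1)) (js!(m-1))) =
          (\<Prod>m\<in>{1..n}. R (g (2*m-2)) (g (2*m-1)) (as!(m-1)) (bs!(m-1))
                      * V (g (2*m-1)) (g (2*m)) (ii!(m-1)) (js!(m-1)))"
      by (rule prod.cong) auto
    show "e (?f 0) * (\<Prod>m\<in>{1..Suc n}. R (?f (2*m-2)) (?f (2*m-1)) (as!(m-1)) (bs!(m-1))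
                      * V (?f (2*m-1)) (?f (2*m)) (ii!(m-1)) (js!(m-1))) * u (?f (2*Suc n)) =
          A g * (R (g (2*n)) y1 (as!n) (bs!n) * V y1 y2 (ii!n) (js!n)) * u y2"
      unfolding prod.nat_ivl_Suc'[of 1 n] using p
      by (simp add: A_def mult_ac)
  qed
  also have "\<dots> = (\<Sum>g\<in>{0..2*n} \<rightarrow>\<^sub>E {..<N}. \<Sum>y1<N. \<Sum>y2<N. A g * (R (g (2*n)) y1 (as!n) (bs!n) * V y1 y2 (ii!n) (js!n)) * u y2)"
    by (subst sum.swap, subst (2) sum.swap, subst sum.swap) (rule refl)
  also have "\<dots> = Mn N R V e (app N (\<lambda>y x. R y x (as!n) (bs!n)) (app N (\<lambda>y x. V y x (ii!n) (js!n)) u)) n as ii bs js"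
    unfolding Mn_def app_def A_def
    by (simp add: sum_distrib_left sum_distrib_right mult_ac)
  finally show ?thesis .
qed

lemma Mn_cong:
  assumes "\<And>k. k < n \<Longrightarrow> as!k = as'!k" "\<And>k. k < n \<Longrightarrow> ii!k = ii'!k"
    "\<And>k. k < n \<Longrightarrow> bs!k = bs'!k" "\<And>k. k < n \<Longrightarrow> js!k = js'!k"
  shows "Mn N R V e u n as ii bs js = Mn N R V e u n as' ii' bs' js'"
  unfolding Mn_def
  by (intro sum.cong refl arg_cong2[where f="(*)"] prod.cong) (auto simp: assms)

lemma Mn_Wc:
  "length as = n \<Longrightarrow> length ii = n \<Longrightarrow> length bs = n \<Longrightarrow> length js = n \<Longrightarrow>
   Mn N R V e u n as ii bs js = (\<Sum>x<N. e x * Wc N R V as ii bs js u x)"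
proof (induction n arbitrary: as ii bs js u)
  case 0
  then show ?case
    unfolding Mn_def by (simp add: sum_PiE_insert[where S="{}", simplified])
next
  case (Suc n)
  obtain as' a where as: "as = as'@[a]" using Suc.prems(1) by (cases as rule: rev_exhaust) auto
  obtain ii' i where ii: "ii = ii'@[i]" using Suc.prems(2) by (cases ii rule: rev_exhaust) auto
  obtain bs' b where bs: "bs = bs'@[b]" using Suc.prems(3) by (cases bs rule: rev_exhaust) auto
  obtain js' j where js: "js = js'@[j]" using Suc.prems(4) by (cases js rule: rev_exhaust) auto
  have l: "length as' = n" "length ii' = n" "length bs' = n" "length js' = n"
    using Suc.prems as ii bs js by auto
  have "Mn N R V e u (Suc n) as ii bs js =
     Mn N R V e (app N (\<lambda>y x. R y x a b) (app N (\<lambda>y x. V y x i j) u)) n as' ii' bs' js'"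
  proof -
    have n: "as!n = a" "ii!n = i" "bs!n = b" "js!n = j" using l as ii bs js by (auto simp: nth_append)
    show ?thesis unfolding Mn_Suc n using l as ii bs js
      by (intro Mn_cong) (auto simp: nth_append)
  qed
  also have "\<dots> = (\<Sum>x<N. e x * Wc N R V as ii bs js u x)"
    using Suc.IH[OF l] l by (simp add: as ii bs js Wc_snoc)
  finally show ?case .
qed


lemma pull1: "(\<Sum>x\<in>A. \<Sum>y\<in>B. F x y) = (\<Sum>y\<in>B. \<Sum>x\<in>A. F x y)"
  by (rule sum.swap)
lemma pull2: "(\<Sum>x\<in>A. \<Sum>y\<in>B. \<Sum>z\<in>C. F x y z) = (\<Sum>z\<in>C. \<Sum>x\<in>A. \<Sum>y\<in>B. F x y z)"
proof -
  have "(\<Sum>x\<in>A. \<Sum>y\<in>B. \<Sum>z\<in>C. F x y z) = (\<Sum>x\<in>A. \<Sum>z\<in>C. \<Sum>y\<in>B. F x y z)"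
    by (rule sum.cong[OF refl], rule sum.swap)
  also have "\<dots> = (\<Sum>z\<in>C. \<Sum>x\<in>A. \<Sum>y\<in>B. F x y z)" by (rule sum.swap)
  finally show ?thesis .
qed
lemma pull3: "(\<Sum>x\<in>A. \<Sum>y\<in>B. \<Sum>z\<in>C. \<Sum>w\<in>D. F x y z w) = (\<Sum>w\<in>D. \<Sum>x\<in>A. \<Sum>y\<in>B. \<Sum>z\<in>C. F x y z w)"
proof -
  have "(\<Sum>x\<in>A. \<Sum>y\<in>B. \<Sum>z\<in>C. \<Sum>w\<in>D. F x y z w) = (\<Sum>x\<in>A. \<Sum>w\<in>D. \<Sum>y\<in>B. \<Sum>z\<in>C. F x y z w)"
    by (rule sum.cong[OF refl], rule pull2)
  also have "\<dots> = (\<Sum>w\<in>D. \<Sum>x\<in>A. \<Sum>y\<in>B. \<Sum>z\<in>C. F x y z w)" by (rule sum.swap)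
  finally show ?thesis .
qed
lemma pull4: "(\<Sum>x\<in>A. \<Sum>y\<in>B. \<Sum>z\<in>C. \<Sum>w\<in>D. \<Sum>t\<in>E. F x y z w t) = (\<Sum>t\<in>E. \<Sum>x\<in>A. \<Sum>y\<in>B. \<Sum>z\<in>C. \<Sum>w\<in>D. F x y z w t)"
proof -
  have "(\<Sum>x\<in>A. \<Sum>y\<in>B. \<Sum>z\<in>C. \<Sum>w\<in>D. \<Sum>t\<in>E. F x y z w t) = (\<Sum>x\<in>A. \<Sum>t\<in>E. \<Sum>y\<in>B. \<Sum>z\<in>C. \<Sum>w\<in>D. F x y z w t)"
    by (rule sum.cong[OF refl], rule pull3)
  also have "\<dots> = (\<Sum>t\<in>E. \<Sum>x\<in>A. \<Sum>y\<in>B. \<Sum>z\<in>C. \<Sum>w\<in>D. F x y z w t)" by (rule sum.swap)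
  finally show ?thesis .
qed
lemma pull5: "(\<Sum>x1\<in>A1. \<Sum>x2\<in>A2. \<Sum>x3\<in>A3. \<Sum>x4\<in>A4. \<Sum>x5\<in>A5. \<Sum>t\<in>E. F x1 x2 x3 x4 x5 t) = (\<Sum>t\<in>E. \<Sum>x1\<in>A1. \<Sum>x2\<in>A2. \<Sum>x3\<in>A3. \<Sum>x4\<in>A4. \<Sum>x5\<in>A5. F x1 x2 x3 x4 x5 t)"
proof -
  have "(\<Sum>x1\<in>A1. \<Sum>x2\<in>A2. \<Sum>x3\<in>A3. \<Sum>x4\<in>A4. \<Sum>x5\<in>A5. \<Sum>t\<in>E. F x1 x2 x3 x4 x5 t) = (\<Sum>x1\<in>A1. \<Sum>t\<in>E. \<Sum>x2\<in>A2. \<Sum>x3\<in>A3. \<Sum>x4\<in>A4. \<Sum>x5\<in>A5. F x1 x2 x3 x4 x5 t)"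
    by (rule sum.cong[OF refl], rule pull4)
  also have "\<dots> = (\<Sum>t\<in>E. \<Sum>x1\<in>A1. \<Sum>x2\<in>A2. \<Sum>x3\<in>A3. \<Sum>x4\<in>A4. \<Sum>x5\<in>A5. F x1 x2 x3 x4 x5 t)" by (rule sum.swap)
  finally show ?thesis .
qed
lemma pull6: "(\<Sum>x0\<in>A0. \<Sum>x1\<in>A1. \<Sum>x2\<in>A2. \<Sum>x3\<in>A3. \<Sum>x4\<in>A4. \<Sum>x5\<in>A5. \<Sum>t\<in>E. F x0 x1 x2 x3 x4 x5 t) = (\<Sum>t\<in>E. \<Sum>x0\<in>A0. \<Sum>x1\<in>A1. \<Sum>x2\<in>A2. \<Sum>x3\<in>A3. \<Sum>x4\<in>A4. \<Sum>x5\<in>A5. F x0 x1 x2 x3 x4 x5 t)"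
proof -
  have "(\<Sum>x0\<in>A0. \<Sum>x1\<in>A1. \<Sum>x2\<in>A2. \<Sum>x3\<in>A3. \<Sum>x4\<in>A4. \<Sum>x5\<in>A5. \<Sum>t\<in>E. F x0 x1 x2 x3 x4 x5 t) = (\<Sum>x0\<in>A0. \<Sum>t\<in>E. \<Sum>x1\<in>A1. \<Sum>x2\<in>A2. \<Sum>x3\<in>A3. \<Sum>x4\<in>A4. \<Sum>x5\<in>A5. F x0 x1 x2 x3 x4 x5 t)"
    by (rule sum.cong[OF refl], rule pull5)
  also have "\<dots> = (\<Sum>t\<in>E. \<Sum>x0\<in>A0. \<Sum>x1\<in>A1. \<Sum>x2\<in>A2. \<Sum>x3\<in>A3. \<Sum>x4\<in>A4. \<Sum>x5\<in>A5. F x0 x1 x2 x3 x4 x5 t)" by (rule sum.swap)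
  finally show ?thesis .
qed


lemma idx0: "idx_lists 0 d = {[]}"
  unfolding idx_lists_def by auto

lemma idx_Suc: "idx_lists (Suc n) d = (\<lambda>(k,ks). k#ks) ` ({..<d} \<times> idx_lists n d)"
  unfolding idx_lists_def
  by (auto simp: length_Suc_conv image_iff)

lemma idx_sum: "(\<Sum>ks\<in>idx_lists (Suc n) d. F ks) = (\<Sum>k<d. \<Sum>ks\<in>idx_lists n d. F (k#ks))"
proof -
  have "inj_on (\<lambda>(k,ks). k#ks) ({..<d} \<times> idx_lists n d)" by (auto simp: inj_on_def)
  then show ?thesis unfolding idx_Suc
    by (simp add: sum.reindex sum.cartesian_product case_prod_unfold)
qed

lemma idx_mem: "ks \<in> idx_lists n d \<Longrightarrow> length ks = n \<and> set ks \<subseteq> {..<d}"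
  unfolding idx_lists_def by auto

locale pbctx =
  fixes N d dv :: nat
    and mu cop :: "nat \<Rightarrow> nat \<Rightarrow> nat \<Rightarrow> complex"
    and one eps :: "nat \<Rightarrow> complex"
    and rho v :: "nat \<Rightarrow> nat \<Rightarrow> nat \<Rightarrow> complex"
  assumes pb: "prebialgebra N mu one cop eps"
    and rp: "representation N mu one d rho"
    and cr: "corepresentation N cop eps dv v"
begin

abbreviation "Rop a b \<equiv> app N (\<lambda>y x. Rcoef N cop rho y x a b)"
abbreviation "Vop i j \<equiv> app N (\<lambda>y x. Vcoef N mu v y x i j)"
abbreviation "U \<equiv> Ucoef N rho v"

lemmas pbf = pb[unfolded prebialgebra_def]
lemmas rpf = rp[unfolded representation_def]
lemmas crf = cr[unfolded corepresentation_def]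
lemmas counit = pbf[THEN conjunct2, THEN conjunct2, THEN conjunct2, THEN conjunct2, THEN conjunct1, rule_format]
lemmas unitL = pbf[THEN conjunct2, THEN conjunct1, rule_format]
lemmas Dmult = pbf[THEN conjunct2, THEN conjunct2, THEN conjunct2, THEN conjunct2, THEN conjunct2, THEN conjunct2, rule_format]
lemmas rmult = rpf[THEN conjunct1, rule_format]
lemmas runit = rpf[THEN conjunct2, rule_format]
lemmas cdelta = crf[THEN conjunct1, rule_format]
lemmas ceps = crf[THEN conjunct2, rule_format]
thm counit unitL Dmult rmult runit cdelta ceps

lemma E_Rop: "(\<Sum>x<N. eps x * Rop a b f x) = (\<Sum>x<N. f x * rho x a b)"
proof -
  have "(\<Sum>x<N. eps x * Rop a b f x) = (\<Sum>y<N. f y * (\<Sum>z<N. rho z a b * (\<Sum>x<N. eps x * cop y x z)))"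
  proof -
    have "(\<Sum>x<N. eps x * Rop a b f x) = (\<Sum>x<N. \<Sum>y<N. \<Sum>z<N. eps x * cop y x z * rho z a b * f y)"
      unfolding app_def Rcoef_def by (simp add: sum_distrib_left sum_distrib_right mult_ac)
    also have "\<dots> = (\<Sum>y<N. \<Sum>x<N. \<Sum>z<N. eps x * cop y x z * rho z a b * f y)"
      by (rule sum.swap)
    also have "\<dots> = (\<Sum>y<N. \<Sum>z<N. \<Sum>x<N. eps x * cop y x z * rho z a b * f y)"
      by (rule sum.cong[OF refl], rule sum.swap)
    also have "\<dots> = (\<Sum>y<N. f y * (\<Sum>z<N. rho z a b * (\<Sum>x<N. eps x * cop y x z)))"
      by (simp add: sum_distrib_left sum_distrib_right mult_ac)
    finally show ?thesis .
  qed
  also have "\<dots> = (\<Sum>y<N. f y * (\<Sum>z<N. rho z a b * (if y = z then 1 else 0)))"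
    by (intro sum.cong refl arg_cong2[where f="(*)"]) (simp add: counit)
  also have "\<dots> = (\<Sum>x<N. f x * rho x a b)"
    by (simp add: if_distrib cong: if_cong)
  finally show ?thesis .
qed

lemma rL_Vop:
  assumes "a<d" "b<d"
  shows "(\<Sum>y<N. Vop i j f y * rho y a b) = (\<Sum>c<d. (\<Sum>x<N. f x * rho x a c) * U c b i j)"
proof -
  have "(\<Sum>y<N. Vop i j f y * rho y a b) = (\<Sum>y<N. \<Sum>x<N. \<Sum>z<N. v i j z * mu x z y * f x * rho y a b)"
    unfolding app_def Vcoef_def by (simp add: sum_distrib_left sum_distrib_right mult_ac)
  also have "\<dots> = (\<Sum>x<N. \<Sum>z<N. \<Sum>y<N. v i j z * mu x z y * f x * rho y a b)"
    by (rule pull2[symmetric])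
  also have "\<dots> = (\<Sum>x<N. \<Sum>z<N. f x * v i j z * (\<Sum>y<N. mu x z y * rho y a b))"
    by (simp add: sum_distrib_left sum_distrib_right mult_ac)
  also have "\<dots> = (\<Sum>x<N. \<Sum>z<N. f x * v i j z * (\<Sum>c<d. rho x a c * rho z c b))"
    using assms by (simp add: rmult)
  also have "\<dots> = (\<Sum>x<N. \<Sum>z<N. \<Sum>c<d. f x * v i j z * rho x a c * rho z c b)"
    by (simp add: sum_distrib_left sum_distrib_right mult_ac)
  also have "\<dots> = (\<Sum>c<d. \<Sum>x<N. \<Sum>z<N. f x * v i j z * rho x a c * rho z c b)"
    by (rule pull2)
  also have "\<dots> = (\<Sum>c<d. \<Sum>z<N. \<Sum>x<N. f x * v i j z * rho x a c * rho z c b)"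
    by (rule sum.cong[OF refl], rule sum.swap)
  also have "\<dots> = (\<Sum>c<d. (\<Sum>x<N. f x * rho x a c) * U c b i j)"
    unfolding Ucoef_def by (simp add: sum_distrib_left sum_distrib_right mult_ac)
  finally show ?thesis .
qed

lemma Vop_one: "x < N \<Longrightarrow> Vop i j one x = v i j x"
proof -
  assume x: "x < N"
  have "Vop i j one x = (\<Sum>x'<N. \<Sum>z<N. v i j z * mu x' z x * one x')"
    unfolding app_def Vcoef_def by (simp add: sum_distrib_left sum_distrib_right mult_ac)
  also have "\<dots> = (\<Sum>z<N. \<Sum>x'<N. v i j z * mu x' z x * one x')"
    by (rule sum.swap)
  also have "\<dots> = (\<Sum>z<N. v i j z * (\<Sum>k<N. one k * mu k z x))"
    by (simp add: sum_distrib_left sum_distrib_right mult_ac)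
  also have "\<dots> = (\<Sum>z<N. v i j z * (if z = x then 1 else 0))"
    using x by (simp add: unitL)
  also have "\<dots> = v i j x" using x by (simp add: if_distrib cong: if_cong)
  finally show ?thesis .
qed

lemma Rop_v:
  assumes "i<dv" "j<dv" "y<N"
  shows "Rop a b (v i j) y = (\<Sum>k<dv. U a b k j * v i k y)"
proof -
  have "Rop a b (v i j) y = (\<Sum>x<N. \<Sum>z<N. cop x y z * rho z a b * v i j x)"
    unfolding app_def Rcoef_def by (simp add: sum_distrib_left sum_distrib_right mult_ac)
  also have "\<dots> = (\<Sum>z<N. \<Sum>x<N. cop x y z * rho z a b * v i j x)"
    by (rule sum.swap)
  also have "\<dots> = (\<Sum>z<N. rho z a b * (\<Sum>x<N. v i j x * cop x y z))"
    by (simp add: sum_distrib_left sum_distrib_right mult_ac)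
  also have "\<dots> = (\<Sum>z<N. rho z a b * (\<Sum>k<dv. v i k y * v k j z))"
    using assms by (simp add: cdelta)
  also have "\<dots> = (\<Sum>z<N. \<Sum>k<dv. rho z a b * v i k y * v k j z)"
    by (simp add: sum_distrib_left sum_distrib_right mult_ac)
  also have "\<dots> = (\<Sum>k<dv. \<Sum>z<N. rho z a b * v i k y * v k j z)"
    by (rule sum.swap)
  also have "\<dots> = (\<Sum>k<dv. U a b k j * v i k y)"
    unfolding Ucoef_def by (simp add: sum_distrib_left sum_distrib_right mult_ac)
  finally show ?thesis .
qed

lemma comm:
  assumes "a<d" "b<d" "i<dv" "j<dv" "y<N"
  shows "Rop a b (Vop i j f) y = (\<Sum>k<dv. \<Sum>c<d. U c b k j * Vop i k (Rop a c f) y)"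
proof -
  define F where "F x z x' w = cop x y z * rho z a b * (v i j w * mu x' w x * f x')" for x z x' w
  define H where "H x' w z a1 b1 a2 b2 = f x' * v i j w * rho z a b * cop x' a1 b1 * cop w a2 b2 * mu a1 a2 y * mu b1 b2 z" for x' w z a1 b1 a2 b2
  define K where "K x' a1 b1 a2 b2 k c = f x' * cop x' a1 b1 * mu a1 a2 y * v i k a2 * v k j b2 * rho b1 a c * rho b2 c b" for x' a1 b1 a2 b2 k c
  have "Rop a b (Vop i j f) y = (\<Sum>x<N. \<Sum>x'<N. \<Sum>w<N. \<Sum>z<N. F x z x' w)"
    unfolding app_def Rcoef_def Vcoef_def F_def by (simp add: sum_distrib_left sum_distrib_right mult_ac)
  also have "\<dots> = (\<Sum>x<N. \<Sum>z<N. \<Sum>x'<N. \<Sum>w<N. F x z x' w)"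
    by (rule sum.cong[OF refl], rule pull2)
  also have "\<dots> = (\<Sum>w<N. \<Sum>x<N. \<Sum>z<N. \<Sum>x'<N. F x z x' w)"
    by (rule pull3)
  also have "\<dots> = (\<Sum>x'<N. \<Sum>w<N. \<Sum>x<N. \<Sum>z<N. F x z x' w)"
    by (rule pull3)
  also have "\<dots> = (\<Sum>x'<N. \<Sum>w<N. \<Sum>z<N. \<Sum>x<N. F x z x' w)"
    by (rule sum.cong[OF refl], rule sum.cong[OF refl], rule sum.swap)
  also have "\<dots> = (\<Sum>x'<N. \<Sum>w<N. f x' * v i j w * (\<Sum>z<N. rho z a b * (\<Sum>x<N. mu x' w x * cop x y z)))"
    unfolding F_def by (simp add: sum_distrib_left sum_distrib_right mult_ac)
  also have "\<dots> = (\<Sum>x'<N. \<Sum>w<N. f x' * v i j w * (\<Sum>z<N. rho z a b *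
        (\<Sum>a1<N. \<Sum>b1<N. \<Sum>a2<N. \<Sum>b2<N. cop x' a1 b1 * cop w a2 b2 * mu a1 a2 y * mu b1 b2 z)))"
    using assms by (simp add: Dmult)
  also have "\<dots> = (\<Sum>x'<N. \<Sum>w<N. \<Sum>z<N. \<Sum>a1<N. \<Sum>b1<N. \<Sum>a2<N. \<Sum>b2<N. H x' w z a1 b1 a2 b2)"
    unfolding H_def by (simp add: sum_distrib_left sum_distrib_right mult_ac)
  also have "\<dots> = (\<Sum>x'<N. \<Sum>w<N. \<Sum>a1<N. \<Sum>b1<N. \<Sum>a2<N. \<Sum>b2<N. \<Sum>z<N. H x' w z a1 b1 a2 b2)"
    by (rule sum.cong[OF refl], rule sum.cong[OF refl], rule pull4[symmetric])
  also have "\<dots> = (\<Sum>x'<N. \<Sum>a1<N. \<Sum>b1<N. \<Sum>a2<N. \<Sum>b2<N. \<Sum>w<N. \<Sum>z<N. H x' w z a1 b1 a2 b2)"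
    by (rule sum.cong[OF refl], rule pull4[symmetric])
  also have "\<dots> = (\<Sum>x'<N. \<Sum>a1<N. \<Sum>b1<N. \<Sum>a2<N. \<Sum>b2<N.
       f x' * cop x' a1 b1 * mu a1 a2 y * (\<Sum>w<N. v i j w * cop w a2 b2) * (\<Sum>z<N. mu b1 b2 z * rho z a b))"
    unfolding H_def by (simp add: sum_distrib_left sum_distrib_right mult_ac)
  also have "\<dots> = (\<Sum>x'<N. \<Sum>a1<N. \<Sum>b1<N. \<Sum>a2<N. \<Sum>b2<N.
       f x' * cop x' a1 b1 * mu a1 a2 y * (\<Sum>k<dv. v i k a2 * v k j b2) * (\<Sum>c<d. rho b1 a c * rho b2 c b))"
    using assms by (simp add: cdelta rmult)
  also have "\<dots> = (\<Sum>x'<N. \<Sum>a1<N. \<Sum>b1<N. \<Sum>a2<N. \<Sum>b2<N. \<Sum>k<dv. \<Sum>c<d. K x' a1 b1 a2 b2 k c)"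
    unfolding K_def by (simp add: sum_distrib_left sum_distrib_right mult_ac)
  also have "\<dots> = (\<Sum>c<d. \<Sum>x'<N. \<Sum>a1<N. \<Sum>b1<N. \<Sum>a2<N. \<Sum>b2<N. \<Sum>k<dv. K x' a1 b1 a2 b2 k c)"
    by (rule pull6)
  also have "\<dots> = (\<Sum>c<d. \<Sum>k<dv. \<Sum>x'<N. \<Sum>a1<N. \<Sum>b1<N. \<Sum>a2<N. \<Sum>b2<N. K x' a1 b1 a2 b2 k c)"
    by (rule sum.cong[OF refl], rule pull5)
  also have "\<dots> = (\<Sum>k<dv. \<Sum>c<d. \<Sum>x'<N. \<Sum>a1<N. \<Sum>b1<N. \<Sum>a2<N. \<Sum>b2<N. K x' a1 b1 a2 b2 k c)"
    by (rule sum.swap)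
  also have "\<dots> = (\<Sum>k<dv. \<Sum>c<d. \<Sum>a1<N. \<Sum>x'<N. \<Sum>b1<N. \<Sum>a2<N. \<Sum>b2<N. K x' a1 b1 a2 b2 k c)"
    by (rule sum.cong[OF refl], rule sum.cong[OF refl], rule sum.swap)
  also have "\<dots> = (\<Sum>k<dv. \<Sum>c<d. U c b k j * Vop i k (Rop a c f) y)"
    unfolding K_def app_def Rcoef_def Vcoef_def Ucoef_def by (simp add: sum_distrib_left sum_distrib_right mult_ac)
  finally show ?thesis .
qed

abbreviation "W \<equiv> Wc N (Rcoef N cop rho) (Vcoef N mu v)"

lemma chainL:
  "length as = Suc n \<Longrightarrow> length ii = Suc n \<Longrightarrow> length bs = Suc n \<Longrightarrow> length js = Suc n \<Longrightarrow>
   set as \<subseteq> {..<d} \<Longrightarrow> set ii \<subseteq> {..<dv} \<Longrightarrow> set bs \<subseteq> {..<d} \<Longrightarrow> set js \<subseteq> {..<dv} \<Longrightarrow> y < N \<Longrightarrow>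
   W as ii bs js one y = (\<Sum>cs\<in>idx_lists n d. \<Sum>ks\<in>idx_lists (Suc n) dv.
      (\<Prod>m<Suc n. U ((cs@[last as])!m) (bs!m) (ks!m) (js!m)) *
      Vop (hd ii) (hd ks) (W (butlast as) (tl ii) cs (tl ks) one) y)"
proof (induction n arbitrary: as ii bs js y)
  case 0
  then obtain a i b j where l: "as = [a]" "ii = [i]" "bs = [b]" "js = [j]"
    by (auto simp: length_Suc_conv)
  have r: "a < d" "i < dv" "b < d" "j < dv" using 0 l by auto
  have "W as ii bs js one y = Rop a b (v i j) y"
    using l by (simp add: Vop_one cong: app_cong)
  also have "\<dots> = (\<Sum>k<dv. U a b k j * v i k y)" using r 0 by (simp add: Rop_v)
  also have "\<dots> = (\<Sum>k<dv. U a b k j * Vop i k one y)" using 0 by (simp add: Vop_one)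
  finally show ?case using l by (simp add: idx0 idx_sum)
next
  case (Suc n)
  then obtain a as' i ii' b bs' j js' where l: "as = a#as'" "ii = i#ii'" "bs = b#bs'" "js = j#js'"
    by (auto simp: length_Suc_conv)
  have r: "a < d" "i < dv" "b < d" "j < dv" using Suc.prems l by auto
  have ne: "as' \<noteq> []" "ii' \<noteq> []" using Suc.prems l by auto
  define P where "P cs ks = (\<Prod>m<Suc n. U ((cs@[last as'])!m) (bs'!m) (ks!m) (js'!m))" for cs ks
  define G where "G cs ks = Vop (hd ii') (hd ks) (W (butlast as') (tl ii') cs (tl ks) one)" for cs ks
  have IH: "\<And>y. y < N \<Longrightarrow> W as' ii' bs' js' one y = (\<Sum>cs\<in>idx_lists n d. \<Sum>ks\<in>idx_lists (Suc n) dv. P cs ks * G cs ks y)"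
    unfolding P_def G_def using Suc.prems l by (intro Suc.IH) auto
  have "W as ii bs js one y = Rop a b (Vop i j (\<lambda>y. \<Sum>cs\<in>idx_lists n d. \<Sum>ks\<in>idx_lists (Suc n) dv. P cs ks * G cs ks y)) y"
    using l IH by (simp cong: app_cong)
  also have "\<dots> = (\<Sum>cs\<in>idx_lists n d. \<Sum>ks\<in>idx_lists (Suc n) dv. P cs ks * Rop a b (Vop i j (G cs ks)) y)"
    by (simp add: app_sum app_scale)
  also have "\<dots> = (\<Sum>cs\<in>idx_lists n d. \<Sum>ks\<in>idx_lists (Suc n) dv. P cs ks * (\<Sum>k<dv. \<Sum>c<d. U c b k j * Vop i k (Rop a c (G cs ks)) y))"
    using r Suc.prems by (simp add: comm)
  also have "\<dots> = (\<Sum>cs\<in>idx_lists n d. \<Sum>ks\<in>idx_lists (Suc n) dv. \<Sum>k<dv. \<Sum>c<d. U c b k j * P cs ks * Vop i k (W (a # butlast as') ii' (c#cs) ks one) y)"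
  proof (intro sum.cong refl)
    fix cs ks assume ks: "ks \<in> idx_lists (Suc n) dv"
    then obtain k0 ks0 where "ks = k0 # ks0" using idx_mem[OF ks] by (cases ks) auto
    then have "\<And>c. Rop a c (G cs ks) = W (a # butlast as') ii' (c#cs) ks one"
      using ne unfolding G_def by (cases ii') auto
    then show "P cs ks * (\<Sum>k<dv. \<Sum>c<d. U c b k j * Vop i k (Rop a c (G cs ks)) y) =
      (\<Sum>k<dv. \<Sum>c<d. U c b k j * P cs ks * Vop i k (W (a # butlast as') ii' (c#cs) ks one) y)"
      by (simp add: sum_distrib_left mult_ac)
  qed
  also have "\<dots> = (\<Sum>c<d. \<Sum>cs\<in>idx_lists n d. \<Sum>ks\<in>idx_lists (Suc n) dv. \<Sum>k<dv. U c b k j * P cs ks * Vop i k (W (a # butlast as') ii' (c#cs) ks one) y)"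
    by (rule pull3)
  also have "\<dots> = (\<Sum>c<d. \<Sum>cs\<in>idx_lists n d. \<Sum>k<dv. \<Sum>ks\<in>idx_lists (Suc n) dv. U c b k j * P cs ks * Vop i k (W (a # butlast as') ii' (c#cs) ks one) y)"
    by (rule sum.cong[OF refl], rule sum.cong[OF refl], rule sum.swap)
  also have "\<dots> = (\<Sum>cs\<in>idx_lists (Suc n) d. \<Sum>ks\<in>idx_lists (Suc (Suc n)) dv.
      (\<Prod>m<Suc (Suc n). U ((cs@[last as])!m) (bs!m) (ks!m) (js!m)) *
      Vop (hd ii) (hd ks) (W (butlast as) (tl ii) cs (tl ks) one) y)"
    unfolding l
    apply (simp only: idx_sum[of _ n d] idx_sum[of _ "Suc n" dv])
    apply (intro sum.cong refl)
    apply (subst prod.lessThan_Suc_shift)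
    using ne unfolding P_def by (simp add: mult_ac)
  finally show ?case .
qed

lemma E_app: "(\<Sum>x<N. eps x * f x) = app N (\<lambda>_ x. eps x) f 0"
  unfolding app_def by simp

lemma main_loc:
  "length as = Suc n \<Longrightarrow> length ii = Suc n \<Longrightarrow> length bs = Suc n \<Longrightarrow> length js = Suc n \<Longrightarrow>
   set as \<subseteq> {..<d} \<Longrightarrow> set ii \<subseteq> {..<dv} \<Longrightarrow> set bs \<subseteq> {..<d} \<Longrightarrow> set js \<subseteq> {..<dv} \<Longrightarrow>
   (\<Sum>x<N. eps x * W as ii bs js one x) = Tn U d dv (Suc n) as ii bs js"
proof (induction n arbitrary: as ii bs js)
  case 0
  then obtain a i b j where l: "as = [a]" "ii = [i]" "bs = [b]" "js = [j]"
    by (auto simp: length_Suc_conv)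
  have r: "a < d" "i < dv" "b < d" "j < dv" using 0 l by auto
  have "(\<Sum>x<N. eps x * W as ii bs js one x) = (\<Sum>c<d. (\<Sum>x<N. one x * rho x a c) * U c b i j)"
    using l r by (simp add: E_Rop rL_Vop)
  also have "\<dots> = (\<Sum>c<d. (if a = c then 1 else 0) * U c b i j)"
    using r by (simp add: runit)
  also have "\<dots> = (\<Sum>c<d. if a = c then U c b i j else 0)"
    by (rule sum.cong) auto
  also have "\<dots> = U a b i j" using r by simp
  finally show ?case using l by simp
next
  case (Suc n)
  then obtain a as' i ii' b bs' j js' where l: "as = a#as'" "ii = i#ii'" "bs = b#bs'" "js = j#js'"
    by (auto simp: length_Suc_conv)
  have r: "a < d" "i < dv" "b < d" "j < dv" using Suc.prems l by auto
  have ne: "as' \<noteq> []" "ii' \<noteq> []" using Suc.prems l by auto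
  define P where "P cs ks = (\<Prod>m<Suc n. U ((cs@[last as'])!m) (bs'!m) (ks!m) (js'!m))" for cs ks
  define G where "G cs ks = Vop (hd ii') (hd ks) (W (butlast as') (tl ii') cs (tl ks) one)" for cs ks
  define X where "X = W as' ii' bs' js' one"
  have CL: "\<And>y. y < N \<Longrightarrow> X y = (\<Sum>cs\<in>idx_lists n d. \<Sum>ks\<in>idx_lists (Suc n) dv. P cs ks * G cs ks y)"
    unfolding P_def G_def X_def using Suc.prems l by (intro chainL) auto
  have "(\<Sum>x<N. eps x * W as ii bs js one x) = (\<Sum>c1<d. (\<Sum>x<N. X x * rho x a c1) * U c1 b i j)"
    using l r by (simp add: E_Rop rL_Vop X_def)
  also have "\<dots> = (\<Sum>c1<d. (\<Sum>x<N. eps x * Rop a c1 X x) * U c1 b i j)"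
    by (simp add: E_Rop)
  also have "\<dots> = (\<Sum>c1<d. (\<Sum>cs\<in>idx_lists n d. \<Sum>ks\<in>idx_lists (Suc n) dv. P cs ks *
        (\<Sum>x<N. eps x * Rop a c1 (G cs ks) x)) * U c1 b i j)"
  proof (rule sum.cong[OF refl])
    fix c1
    have "Rop a c1 X = Rop a c1 (\<lambda>y. \<Sum>cs\<in>idx_lists n d. \<Sum>ks\<in>idx_lists (Suc n) dv. P cs ks * G cs ks y)"
      using CL by (rule app_cong)
    then show "(\<Sum>x<N. eps x * Rop a c1 X x) * U c1 b i j = (\<Sum>cs\<in>idx_lists n d. \<Sum>ks\<in>idx_lists (Suc n) dv. P cs ks *
        (\<Sum>x<N. eps x * Rop a c1 (G cs ks) x)) * U c1 b i j"
      by (simp add: E_app app_sum app_scale)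
  qed
  also have "\<dots> = (\<Sum>c1<d. (\<Sum>cs\<in>idx_lists n d. \<Sum>ks\<in>idx_lists (Suc n) dv. P cs ks *
        Tn U d dv (Suc n) (butlast as) (tl ii) (c1#cs) ks) * U c1 b i j)"
  proof (intro sum.cong refl arg_cong2[where f="(*)"])
    fix c1 cs ks assume c1: "c1 \<in> {..<d}" and cs: "cs \<in> idx_lists n d" and ks: "ks \<in> idx_lists (Suc n) dv"
    obtain k0 ks0 where ks0: "ks = k0 # ks0" using idx_mem[OF ks] by (cases ks) auto
    have "Rop a c1 (G cs ks) = W (a # butlast as') ii' (c1#cs) ks one"
      using ne ks0 unfolding G_def by (cases ii') auto
    moreover have "(\<Sum>x<N. eps x * W (a # butlast as') ii' (c1#cs) ks one x) = Tn U d dv (Suc n) (a # butlast as') ii' (c1#cs) ks"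
      using Suc.prems l c1 idx_mem[OF cs] idx_mem[OF ks] ne
      by (intro Suc.IH) (auto dest: in_set_butlastD)
    ultimately show "(\<Sum>x<N. eps x * Rop a c1 (G cs ks) x) = Tn U d dv (Suc n) (butlast as) (tl ii) (c1#cs) ks"
      using l ne by simp
  qed
  also have "\<dots> = Tn U d dv (Suc (Suc n)) as ii bs js"
    unfolding Tn.simps(3)
    apply (simp only: idx_sum[of _ n d])
    apply (simp only: sum_distrib_right)
    apply (intro sum.cong refl)
    apply (subst prod.lessThan_Suc_shift)
    using l ne unfolding P_def by (simp add: mult_ac)
  finally show ?case .
qed

end

theorem mainTheorem3:
  fixes N d dv n :: nat
    and mu cop :: "nat \<Rightarrow> nat \<Rightarrow> nat \<Rightarrow> complex"
    and one eps :: "nat \<Rightarrow> complex"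
    and rho v :: "nat \<Rightarrow> nat \<Rightarrow> nat \<Rightarrow> complex"
    and as "is" bs js :: "nat list"
  assumes "prebialgebra N mu one cop eps"
    and "representation N mu one d rho"
    and "corepresentation N cop eps dv v"
    and "n \<ge> 1"
    and "length as = n" and "length is = n" and "length bs = n" and "length js = n"
    and "set as \<subseteq> {..<d}" and "set bs \<subseteq> {..<d}"
    and "set is \<subseteq> {..<dv}" and "set js \<subseteq> {..<dv}"
  shows "Mn N (Rcoef N cop rho) (Vcoef N mu v) eps one n as is bs js
         = Tn (Ucoef N rho v) d dv n as is bs js"
proof -
  interpret pbctx N d dv mu cop one eps rho v
    using assms(1-3) by unfold_locales
  obtain n' where n: "n = Suc n'" using assms(4) by (cases n) auto
  have "Mn N (Rcoef N cop rho) (Vcoef N mu v) eps one n as is bs js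
      = (\<Sum>x<N. eps x * Wc N (Rcoef N cop rho) (Vcoef N mu v) as is bs js one x)"
    using assms(5-8) by (rule Mn_Wc)
  also have "\<dots> = Tn (Ucoef N rho v) d dv n as is bs js"
    unfolding n using assms(5-12) unfolding n by (intro main_loc) auto
  finally show ?thesis .
qed

end
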